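(* Let $\sigma>0$, $\alpha>0$, and let $X, Y$ be independent random variables each with the generalized normal distribution $GND(0,\sigma,\alpha)$, i.e. with density $p(x) = \frac{\alpha\Lambda}{2\Gamma(1/\alpha)} e^{-\Lambda^\alpha |x|^\alpha}$, where $\Lambda = \frac{1}{\sigma}\sqrt{\Gamma(3/\alpha)/\Gamma(1/\alpha)}$. Then $Z = XY$ has density $$f_Z(z) = \frac{\alpha \Lambda^2}{\Gamma(1/\alpha)^2}\, K_0\!\left(2\Lambda^\alpha |z|^{\alpha/2}\right), \qquad z \neq 0.$$
   Context: $K_0$ is the modified Bessel function of the second kind of order $0$; $\Gamma$ is the Euler Gamma function. The distribution of $Z$ is called PGND$(\alpha,\sigma)$. *)

theory Defs
  imports "HOL-Probability.Probability"
begin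

text \<open>Modified Bessel function of the second kind of order 0, via its standard
integral representation  K_0(x) = \<integral>_0^\<infinity> exp(-x cosh t) dt  (x > 0).\<close>
definition bessel_K0 :: "real \<Rightarrow> real" where
  "bessel_K0 x = (LBINT t:{0<..}. exp (- x * cosh t))"

definition gnd_Lambda :: "real \<Rightarrow> real \<Rightarrow> real" where
  "gnd_Lambda \<sigma> \<alpha> = (1 / \<sigma>) * sqrt (Gamma (3 / \<alpha>) / Gamma (1 / \<alpha>))"

definition gnd_density :: "real \<Rightarrow> real \<Rightarrow> real \<Rightarrow> real" where
  "gnd_density \<sigma> \<alpha> x =
     \<alpha> * gnd_Lambda \<sigma> \<alpha> / (2 * Gamma (1 / \<alpha>)) *
     exp (- (gnd_Lambda \<sigma> \<alpha> powr \<alpha>) * \<bar>x\<bar> powr \<alpha>)"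

text \<open>Density of the product Z = XY (PGND(alpha, sigma)); the value at 0 is irrelevant
  (null set) and fixed to 0.\<close>
definition pgnd_density :: "real \<Rightarrow> real \<Rightarrow> real \<Rightarrow> real" where
  "pgnd_density \<sigma> \<alpha> z =
     (if z = 0 then 0 else
      \<alpha> * (gnd_Lambda \<sigma> \<alpha>)\<^sup>2 / (Gamma (1 / \<alpha>))\<^sup>2 *
      bessel_K0 (2 * gnd_Lambda \<sigma> \<alpha> powr \<alpha> * \<bar>z\<bar> powr (\<alpha> / 2)))"

end

theory Submission
  imports Defs
begin


lemma product_density:
  fixes f g :: "real \<Rightarrow> ennreal"
  assumes [measurable]: "f \<in> borel_measurable borel" "g \<in> borel_measurable borel"
  assumes "finite_measure (density lborel f)" "finite_measure (density lborel g)"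
  shows "distr (density lborel f \<Otimes>\<^sub>M density lborel g) borel (\<lambda>(x,y). x * y) =
    density lborel (\<lambda>z. \<integral>\<^sup>+y. f (z / y) * g y * ennreal (1 / \<bar>y\<bar>) \<partial>lborel)"
    (is "?l = ?r")
proof (intro measure_eqI)
  fix A assume "A \<in> sets ?l"
  then have [measurable]: "A \<in> sets borel"
    by simp
  interpret F: finite_measure "density lborel f" by fact
  interpret G: finite_measure "density lborel g" by fact
  have sfg: "sigma_finite_measure (density lborel g)" ..
  have "emeasure ?l A = (\<integral>\<^sup>+p. indicator A (fst p * snd p) \<partial>(density lborel f \<Otimes>\<^sub>M density lborel g))"
    apply (subst emeasure_distr, simp, simp)
    apply (subst nn_integral_indicator[symmetric], measurable)
    apply (intro nn_integral_cong)
    apply (auto simp: space_pair_measure split: split_indicator)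
    done
  also have "\<dots> = (\<integral>\<^sup>+p. indicator A (fst p * snd p) \<partial>(density (lborel \<Otimes>\<^sub>M lborel) (\<lambda>(x,y). f x * g y)))"
    by (subst pair_measure_density) (auto intro: sfg lborel.sigma_finite_measure_axioms)
  also have "\<dots> = (\<integral>\<^sup>+p. f (fst p) * g (snd p) * indicator A (fst p * snd p) \<partial>(lborel \<Otimes>\<^sub>M lborel))"
    by (subst nn_integral_density) (auto simp: case_prod_beta)
  also have "\<dots> = (\<integral>\<^sup>+y. (\<integral>\<^sup>+x. f x * g y * indicator A (x * y) \<partial>lborel) \<partial>lborel)"
    by (subst lborel_pair.nn_integral_snd[symmetric]) auto
  also have "\<dots> = (\<integral>\<^sup>+y. (\<integral>\<^sup>+z. f (z / y) * g y * ennreal (1 / \<bar>y\<bar>) * indicator A z \<partial>lborel) \<partial>lborel)"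
  proof (intro nn_integral_cong_AE)
    have "AE y in lborel. y \<noteq> 0"
      by (intro AE_I[where N="{0}"]) auto
    then show "AE y in lborel. (\<integral>\<^sup>+x. f x * g y * indicator A (x * y) \<partial>lborel) =
        (\<integral>\<^sup>+z. f (z / y) * g y * ennreal (1 / \<bar>y\<bar>) * indicator A z \<partial>lborel)"
    proof eventually_elim
      fix y :: real assume y: "y \<noteq> 0"
      have "(\<integral>\<^sup>+x. f x * g y * indicator A (x * y) \<partial>lborel) =
          \<bar>1/y\<bar> * (\<integral>\<^sup>+z. f (0 + (1/y) * z) * g y * indicator A ((0 + (1/y) * z) * y) \<partial>lborel)"
        using y by (intro nn_integral_real_affine) auto
      also have "\<dots> = (\<integral>\<^sup>+z. ennreal \<bar>1/y\<bar> * (f (z / y) * g y * indicator A z) \<partial>lborel)"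
        using y by (subst nn_integral_cmult) auto
      finally show "(\<integral>\<^sup>+x. f x * g y * indicator A (x * y) \<partial>lborel) =
        (\<integral>\<^sup>+z. f (z / y) * g y * ennreal (1 / \<bar>y\<bar>) * indicator A z \<partial>lborel)"
        by (simp add: ac_simps)
    qed
  qed
  also have "\<dots> = (\<integral>\<^sup>+z. (\<integral>\<^sup>+y. f (z / y) * g y * ennreal (1 / \<bar>y\<bar>) * indicator A z \<partial>lborel) \<partial>lborel)"
    by (intro lborel_pair.Fubini') simp
  also have "\<dots> = emeasure ?r A"
    by (auto simp: emeasure_density nn_integral_multc intro!: nn_integral_cong)
  finally show "emeasure ?l A = emeasure ?r A" .
qed simp

lemma (in prob_space) distributed_product:
  fixes f g :: "real \<Rightarrow> ennreal"
  assumes indep: "indep_var borel X borel Y"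
  assumes X: "distributed M lborel X f"
  assumes Y: "distributed M lborel Y g"
  shows "distributed M lborel (\<lambda>x. X x * Y x) (\<lambda>z. \<integral>\<^sup>+y. f (z / y) * g y * ennreal (1 / \<bar>y\<bar>) \<partial>lborel)"
  unfolding distributed_def
proof safe
  have fg[measurable]: "f \<in> borel_measurable borel" "g \<in> borel_measurable borel"
    using distributed_borel_measurable[OF X] distributed_borel_measurable[OF Y] by simp_all
  show "(\<lambda>z. \<integral>\<^sup>+y. f (z / y) * g y * ennreal (1 / \<bar>y\<bar>) \<partial>lborel) \<in> borel_measurable lborel"
    by measurable
  have [measurable]: "random_variable borel X" "random_variable borel Y"
    using distributed_measurable[OF X] distributed_measurable[OF Y] by auto
  have "distr M borel (\<lambda>x. X x * Y x) = distr (distr M borel X \<Otimes>\<^sub>M distr M borel Y) borel (\<lambda>(x,y). x * y)"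
    using indep unfolding indep_var_distribution_eq
    by (auto simp: distr_distr o_def intro!: arg_cong[where f = "distr M borel"])
  also have "\<dots> = distr (density lborel f \<Otimes>\<^sub>M density lborel g) borel (\<lambda>(x,y). x * y)"
    using distributed_distr_eq_density[OF X] distributed_distr_eq_density[OF Y]
    by (simp cong: distr_cong)
  also have "\<dots> = density lborel (\<lambda>z. \<integral>\<^sup>+y. f (z / y) * g y * ennreal (1 / \<bar>y\<bar>) \<partial>lborel)"
  proof (rule product_density)
    show "finite_measure (density lborel f)"
      using X by (rule distributed_finite_measure_density)
    show "finite_measure (density lborel g)"
      using Y by (rule distributed_finite_measure_density)
  qed fact+
  finally show "distr M lborel (\<lambda>x. X x * Y x) = density lborel (\<lambda>z. \<integral>\<^sup>+y. f (z / y) * g y * ennreal (1 / \<bar>y\<bar>) \<partial>lborel)"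
    by (simp cong: distr_cong)
  show "random_variable lborel (\<lambda>x. X x * Y x)"
    using distributed_measurable[OF X] distributed_measurable[OF Y] by simp
qed



lemma nn_integral_even:
  fixes h :: "real \<Rightarrow> ennreal"
  assumes [measurable]: "h \<in> borel_measurable borel" and ev: "\<And>x. h (- x) = h x"
  shows "(\<integral>\<^sup>+x. h x \<partial>lborel) = 2 * (\<integral>\<^sup>+x. h x * indicator {0<..} x \<partial>lborel)"
proof -
  have "(\<integral>\<^sup>+x. h x \<partial>lborel) = (\<integral>\<^sup>+x. h x * indicator {0<..} x + h x * indicator {..<0} x \<partial>lborel)"
    by (intro nn_integral_cong_AE AE_I[where N="{0}"]) (auto split: split_indicator)
  also have "\<dots> = (\<integral>\<^sup>+x. h x * indicator {0<..} x \<partial>lborel) + (\<integral>\<^sup>+x. h x * indicator {..<0} x \<partial>lborel)"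
    by (intro nn_integral_add) auto
  also have "(\<integral>\<^sup>+x. h x * indicator {..<0} x \<partial>lborel) = ennreal \<bar>-1::real\<bar> * (\<integral>\<^sup>+x. h (0 + (-1) * x) * indicator {..<0} (0 + (-1) * x) \<partial>lborel)"
    by (intro nn_integral_real_affine) auto
  also have "\<dots> = (\<integral>\<^sup>+x. h x * indicator {0<..} x \<partial>lborel)"
    by (auto simp: ev intro!: nn_integral_cong split: split_indicator)
  finally show ?thesis by (simp add: mult_2)
qed

lemma nn_integral_SUP_sets:
  fixes h :: "real \<Rightarrow> ennreal"
  assumes [measurable]: "h \<in> borel_measurable borel" and [measurable]: "\<And>n. A n \<in> sets borel"
    and inc: "incseq A" and U: "(\<Union>n. A n) = S"
  shows "(SUP n. \<integral>\<^sup>+x. h x * indicator (A n) x \<partial>lborel) = (\<integral>\<^sup>+x. h x * indicator S x \<partial>lborel)"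
proof -
  have "(SUP n. \<integral>\<^sup>+x. h x * indicator (A n) x \<partial>lborel) = (\<integral>\<^sup>+x. (SUP n. h x * indicator (A n) x) \<partial>lborel)"
  proof (rule nn_integral_monotone_convergence_SUP[symmetric])
    show "incseq (\<lambda>n x. h x * indicator (A n) x)"
      using inc by (auto simp: incseq_def le_fun_def intro!: mult_left_mono split: split_indicator)
  qed auto
  also have "\<dots> = (\<integral>\<^sup>+x. h x * indicator S x \<partial>lborel)"
  proof (intro nn_integral_cong)
    fix x
    show "(SUP n. h x * indicator (A n) x) = h x * indicator S x"
    proof (cases "x \<in> S")
      case True
      then obtain N where N: "x \<in> A N" using U by auto
      show ?thesis
      proof (rule antisym)
        show "(SUP n. h x * indicator (A n) x) \<le> h x * indicator S x"
          using True by (intro SUP_least) (auto split: split_indicator)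
        have "h x * indicator S x = h x * indicator (A N) x" using True N by simp
        also have "\<dots> \<le> (SUP n. h x * indicator (A n) x)" by (rule SUP_upper) auto
        finally show "h x * indicator S x \<le> (SUP n. h x * indicator (A n) x)" .
      qed
    next
      case False
      then have "\<And>n. x \<notin> A n" using U by auto
      then show ?thesis using False by simp
    qed
  qed
  finally show ?thesis .
qed

lemma nn_integral_subst_exp:
  fixes \<phi> :: "real \<Rightarrow> real" and s \<alpha> :: real
  assumes [measurable]: "\<phi> \<in> borel_measurable borel"
    and cont: "continuous_on {0<..} \<phi>" and nonneg: "\<And>y. y > 0 \<Longrightarrow> \<phi> y \<ge> 0"
    and s: "s > 0" and a: "\<alpha> > 0"
  shows "(\<integral>\<^sup>+y. ennreal (\<phi> y / y) * indicator {0<..} y \<partial>lborel) =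
         (\<integral>\<^sup>+u. ennreal (\<phi> (s * exp (u / \<alpha>)) / \<alpha>) \<partial>lborel)"
proof -
  define g where "g u = s * exp (u / \<alpha>)" for u
  define g' where "g' u = s * exp (u / \<alpha>) / \<alpha>" for u
  have gpos: "g u > 0" for u using s by (simp add: g_def)
  have gmono: "g u \<le> g v" if "u \<le> v" for u v
    using s a that by (simp add: g_def divide_right_mono)
  have deriv: "(g has_real_derivative g' x) (at x)" for x
    unfolding g_def g'_def using a by (auto intro!: derivative_eq_intros simp: field_simps)
  have step: "(\<integral>\<^sup>+y. ennreal (\<phi> y / y) * indicator {g (- real n)..g (real n)} y \<partial>lborel) =
      (\<integral>\<^sup>+u. ennreal (\<phi> (g u) / \<alpha>) * indicator {- real n..real n} u \<partial>lborel)" for n :: nat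
  proof -
    have "(\<integral>\<^sup>+y. ennreal (\<phi> y / y) * indicator {g (- real n)..g (real n)} y \<partial>lborel) =
        (\<integral>\<^sup>+y. ennreal (\<phi> y / y * indicator {g (- real n)..g (real n)} y) \<partial>lborel)"
      by (intro nn_integral_cong) (auto split: split_indicator)
    also have "\<dots> = (\<integral>\<^sup>+u. ennreal (\<phi> (g u) / g u * g' u * indicator {- real n..real n} u) \<partial>lborel)"
    proof (rule nn_integral_substitution)
      have "{g (- real n)..g (real n)} \<subseteq> {0<..}" using gpos[of "- real n"] by (auto intro: less_le_trans)
      then have "continuous_on {g (- real n)..g (real n)} (\<lambda>y. \<phi> y / y)"
        by (intro continuous_intros continuous_on_subset[OF cont]) (auto intro: less_le_trans[OF gpos])
      then show "set_borel_measurable borel {g (- real n)..g (real n)} (\<lambda>y. \<phi> y / y)"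
        unfolding set_borel_measurable_def
        by (intro borel_measurable_continuous_on_indicator) auto
      show "continuous_on {- real n..real n} g'"
        unfolding g'_def by (intro continuous_intros) (use a in auto)
      show "g' x \<ge> 0" for x using s a by (simp add: g'_def)
    qed (auto intro: deriv)
    also have "\<dots> = (\<integral>\<^sup>+u. ennreal (\<phi> (g u) / \<alpha>) * indicator {- real n..real n} u \<partial>lborel)"
      using s a by (intro nn_integral_cong) (auto simp: g_def g'_def split: split_indicator)
    finally show ?thesis .
  qed
  have mphi[measurable]: "(\<lambda>y. ennreal (\<phi> y / y)) \<in> borel_measurable borel" by measurable
  have mg[measurable]: "g \<in> borel_measurable borel" unfolding g_def by measurable
  have "(\<integral>\<^sup>+y. ennreal (\<phi> y / y) * indicator {0<..} y \<partial>lborel) =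
      (SUP n. \<integral>\<^sup>+y. ennreal (\<phi> y / y) * indicator {g (- real n)..g (real n)} y \<partial>lborel)"
  proof (rule nn_integral_SUP_sets[symmetric])
    show "incseq (\<lambda>n. {g (- real n)..g (real n)})"
      by (auto simp: incseq_def intro: order_trans[OF gmono] order_trans[OF _ gmono])
    show "(\<Union>n. {g (- real n)..g (real n)}) = {0<..}"
    proof (intro equalityI subsetI)
      fix x assume "x \<in> (\<Union>n. {g (- real n)..g (real n)})"
      then obtain n where "x \<in> {g (- real n)..g (real n)}" by auto
      then show "x \<in> {0<..}" using gpos[of "- real n"] by auto
    next
      fix x :: real assume x: "x \<in> {0<..}"
      define u where "u = \<alpha> * ln (x / s)"
      have gu: "g u = x" using x s a by (simp add: g_def u_def)
      obtain n :: nat where n: "\<bar>u\<bar> \<le> real n" using real_arch_simple by blast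
      have "x \<in> {g (- real n)..g (real n)}" using n gu gmono[of "- real n" u] gmono[of u "real n"] by auto
      then show "x \<in> (\<Union>n. {g (- real n)..g (real n)})" by blast
    qed
  qed auto
  also have "\<dots> = (SUP n. \<integral>\<^sup>+u. ennreal (\<phi> (g u) / \<alpha>) * indicator {- real n..real n} u \<partial>lborel)"
    by (simp add: step)
  also have "\<dots> = (\<integral>\<^sup>+u. ennreal (\<phi> (g u) / \<alpha>) * indicator UNIV u \<partial>lborel)"
  proof (rule nn_integral_SUP_sets)
    show "incseq (\<lambda>n. {- real n..real n})" by (auto simp: incseq_def)
    show "(\<Union>n. {- real n..real n}) = UNIV"
    proof safe
      fix x :: real
      obtain n :: nat where n: "\<bar>x\<bar> \<le> real n" using real_arch_simple by blast
      then have "x \<in> {- real n..real n}" by auto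
      then show "x \<in> (\<Union>n. {- real n..real n})" by blast
    qed auto
  qed auto
  finally show ?thesis by (simp add: g_def)
qed



lemma two_t_le_exp: "2 * t \<le> exp (t::real)"
proof (cases "t \<le> 0")
  case True
  moreover have "exp t > 0" by simp
  ultimately show ?thesis by linarith
next
  case False
  have h: "1 + t/2 \<le> exp (t/2)" by (rule exp_ge_add_one_self)
  have "2 * t \<le> (1 + t/2) * (1 + t/2)"
  proof -
    have "0 \<le> (1 - t/2) * (1 - t/2)" by simp
    then show ?thesis by (simp add: algebra_simps)
  qed
  also have "\<dots> \<le> exp (t/2) * exp (t/2)"
    using h False by (intro mult_mono) auto
  also have "\<dots> = exp t" by (simp add: exp_add[symmetric])
  finally show ?thesis .
qed

lemma t_le_cosh: "(t::real) \<le> cosh t"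
proof -
  have "2 * t \<le> exp t" by (rule two_t_le_exp)
  moreover have "exp (- t) > 0" by simp
  ultimately have "2 * t \<le> exp t + exp (- t)" by linarith
  then show ?thesis by (simp add: cosh_def)
qed

lemma measurable_cosh[measurable]:
  "h \<in> borel_measurable M \<Longrightarrow> (\<lambda>x. cosh (h x :: real)) \<in> borel_measurable M"
  by (rule borel_measurable_continuous_on) (auto intro: continuous_intros)

lemma K0_nn:
  assumes c: "c > 0"
  shows "(\<integral>\<^sup>+t. ennreal (exp (- c * cosh t)) * indicator {0<..} t \<partial>lborel) = ennreal (bessel_K0 c)"
proof -
  let ?I = "\<integral>\<^sup>+t. ennreal (exp (- c * cosh t)) * indicator {0<..} t \<partial>lborel"
  interpret E: prob_space "density lborel (exponential_density c)"
    using c by (rule prob_space_exponential_density)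
  have E1: "(\<integral>\<^sup>+t. ennreal (exponential_density c t) \<partial>lborel) = 1"
    using E.emeasure_space_1 by (simp add: emeasure_density)
  have "?I \<le> (\<integral>\<^sup>+t. ennreal (1 / c) * ennreal (exponential_density c t) \<partial>lborel)"
  proof (intro nn_integral_mono)
    fix t :: real
    show "ennreal (exp (- c * cosh t)) * indicator {0<..} t \<le> ennreal (1 / c) * ennreal (exponential_density c t)"
    proof (cases "t > 0")
      case True
      have "exp (- c * cosh t) \<le> exp (- t * c)"
        using t_le_cosh[of t] c by (simp add: mult_left_mono)
      also have "\<dots> = 1 / c * exponential_density c t" using True c by (simp add: exponential_density_def)
      finally have "exp (- c * cosh t) \<le> 1 / c * exponential_density c t" .
      moreover have "exponential_density c t \<ge> 0" using c True by (simp add: exponential_density_def)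
      ultimately show ?thesis using True c by (simp add: ennreal_mult[symmetric] ennreal_leI)
    qed auto
  qed
  also have "\<dots> = ennreal (1 / c)" using E1 by (simp add: nn_integral_cmult)
  finally have fin: "?I < \<infinity>" using ennreal_less_top order.strict_trans1 by (metis infinity_ennreal_def)
  have "bessel_K0 c = integral\<^sup>L lborel (\<lambda>t. indicator {0<..} t *\<^sub>R exp (- c * cosh t))"
    by (simp add: bessel_K0_def set_lebesgue_integral_def)
  also have "\<dots> = enn2real (\<integral>\<^sup>+t. ennreal (indicator {0<..} t *\<^sub>R exp (- c * cosh t)) \<partial>lborel)"
    by (rule integral_eq_nn_integral) auto
  also have "(\<integral>\<^sup>+t. ennreal (indicator {0<..} t *\<^sub>R exp (- c * cosh t)) \<partial>lborel) = ?I"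
    by (intro nn_integral_cong) (auto split: split_indicator)
  finally show ?thesis using fin by simp
qed



lemma gnd_Lambda_pos: "\<sigma> > 0 \<Longrightarrow> \<alpha> > 0 \<Longrightarrow> gnd_Lambda \<sigma> \<alpha> > 0"
  unfolding gnd_Lambda_def by (auto intro!: mult_pos_pos divide_pos_pos Gamma_real_pos)

lemma gnd_density_nonneg: "\<sigma> > 0 \<Longrightarrow> \<alpha> > 0 \<Longrightarrow> gnd_density \<sigma> \<alpha> x \<ge> 0"
  unfolding gnd_density_def using gnd_Lambda_pos[of \<sigma> \<alpha>] Gamma_real_pos[of "1/\<alpha>"]
  by (auto intro!: mult_nonneg_nonneg divide_nonneg_pos)

lemma gnd_density_measurable[measurable]: "gnd_density \<sigma> \<alpha> \<in> borel_measurable borel"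
  unfolding gnd_density_def by measurable

lemma key_algebra:
  fixes a b u \<alpha> :: real
  assumes a: "a > 0" and al: "\<alpha> > 0"
  defines "y \<equiv> a powr (1/2) * exp (u / \<alpha>)"
  shows "exp (- b * \<bar>a / y\<bar> powr \<alpha>) * exp (- b * \<bar>y\<bar> powr \<alpha>) =
         exp (- (2 * b * a powr (\<alpha> / 2)) * cosh u)"
proof -
  have y: "y > 0" using a by (simp add: y_def)
  have e: "exp (u / \<alpha>) powr \<alpha> = exp u" using al by (simp add: powr_def)
  have ya: "y powr \<alpha> = a powr (\<alpha>/2) * exp u"
    unfolding y_def using a by (simp add: powr_mult powr_powr e)
  have aa: "a powr \<alpha> = a powr (\<alpha>/2) * a powr (\<alpha>/2)"
    by (simp add: powr_add[symmetric])
  have yb: "(a / y) powr \<alpha> = a powr (\<alpha>/2) * exp (- u)"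
    using a y by (simp add: powr_divide ya aa exp_minus field_simps)
  have "exp (- b * \<bar>a / y\<bar> powr \<alpha>) * exp (- b * \<bar>y\<bar> powr \<alpha>) =
        exp (- b * (a powr (\<alpha>/2) * exp (- u)) + - b * (a powr (\<alpha>/2) * exp u))"
    using a y by (simp add: yb ya exp_add[symmetric])
  also have "\<dots> = exp (- (2 * b * a powr (\<alpha> / 2)) * cosh u)"
    by (simp add: cosh_def algebra_simps)
  finally show ?thesis .
qed

lemma pgnd_integral:
  fixes \<sigma> \<alpha> z :: real
  assumes sg: "\<sigma> > 0" and al: "\<alpha> > 0" and z: "z \<noteq> 0"
  shows "(\<integral>\<^sup>+y. ennreal (gnd_density \<sigma> \<alpha> (z / y)) * ennreal (gnd_density \<sigma> \<alpha> y) * ennreal (1 / \<bar>y\<bar>) \<partial>lborel)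
         = ennreal (pgnd_density \<sigma> \<alpha> z)"
proof -
  define L where "L = gnd_Lambda \<sigma> \<alpha>"
  define b where "b = L powr \<alpha>"
  define Cst where "Cst = \<alpha> * L / (2 * Gamma (1 / \<alpha>))"
  define a where "a = \<bar>z\<bar>"
  define c where "c = 2 * b * a powr (\<alpha> / 2)"
  let ?p = "gnd_density \<sigma> \<alpha>"
  have Lpos: "L > 0" unfolding L_def using sg al by (rule gnd_Lambda_pos)
  have Gpos: "Gamma (1 / \<alpha>) > 0" using al by (intro Gamma_real_pos) simp
  have apos: "a > 0" using z by (simp add: a_def)
  have bpos: "b > 0" using Lpos by (simp add: b_def)
  have cpos: "c > 0" using bpos apos by (simp add: c_def)
  have Cpos: "Cst > 0" using al Lpos Gpos by (simp add: Cst_def)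
  have p_eq: "?p x = Cst * exp (- b * \<bar>x\<bar> powr \<alpha>)" for x
    by (simp add: gnd_density_def L_def b_def Cst_def)
  have pnn: "?p x \<ge> 0" for x using gnd_density_nonneg[OF sg al] .
  define \<phi> where "\<phi> y = ?p (z / y) * ?p y" for y
  have [measurable]: "\<phi> \<in> borel_measurable borel" unfolding \<phi>_def by measurable
  have phinn: "\<phi> y \<ge> 0" for y using pnn by (simp add: \<phi>_def)
  have phicont: "continuous_on {0<..} \<phi>"
    unfolding \<phi>_def p_eq using z by (intro continuous_intros) auto
  define H where "H y = ennreal (?p (z / y)) * ennreal (?p y) * ennreal (1 / \<bar>y\<bar>)" for y
  have [measurable]: "H \<in> borel_measurable borel" unfolding H_def by measurable
  have "(\<integral>\<^sup>+y. H y \<partial>lborel) = 2 * (\<integral>\<^sup>+y. H y * indicator {0<..} y \<partial>lborel)"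
    by (rule nn_integral_even) (auto simp: H_def p_eq)
  also have "(\<integral>\<^sup>+y. H y * indicator {0<..} y \<partial>lborel) = (\<integral>\<^sup>+y. ennreal (\<phi> y / y) * indicator {0<..} y \<partial>lborel)"
    using pnn by (intro nn_integral_cong) (auto simp: H_def \<phi>_def ennreal_mult[symmetric] split: split_indicator)
  also have "\<dots> = (\<integral>\<^sup>+u. ennreal (\<phi> (a powr (1/2) * exp (u / \<alpha>)) / \<alpha>) \<partial>lborel)"
    using apos al phinn by (intro nn_integral_subst_exp phicont) auto
  also have "\<dots> = (\<integral>\<^sup>+u. ennreal (Cst^2 / \<alpha>) * ennreal (exp (- c * cosh u)) \<partial>lborel)"
  proof (intro nn_integral_cong)
    fix u :: real
    have "\<phi> (a powr (1/2) * exp (u / \<alpha>)) = Cst^2 * (exp (- b * \<bar>a / (a powr (1/2) * exp (u / \<alpha>))\<bar> powr \<alpha>) *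
        exp (- b * \<bar>a powr (1/2) * exp (u / \<alpha>)\<bar> powr \<alpha>))"
      unfolding \<phi>_def p_eq using apos by (simp add: a_def power2_eq_square abs_divide)
    also have "\<dots> = Cst^2 * exp (- c * cosh u)"
      unfolding c_def using key_algebra[OF apos al, of b u] by simp
    finally show "ennreal (\<phi> (a powr (1/2) * exp (u / \<alpha>)) / \<alpha>) = ennreal (Cst^2 / \<alpha>) * ennreal (exp (- c * cosh u))"
      using al by (simp add: ennreal_mult[symmetric])
  qed
  also have "\<dots> = ennreal (Cst^2 / \<alpha>) * (\<integral>\<^sup>+u. ennreal (exp (- c * cosh u)) \<partial>lborel)"
    by (rule nn_integral_cmult) auto
  also have "(\<integral>\<^sup>+u. ennreal (exp (- c * cosh u)) \<partial>lborel) = 2 * (\<integral>\<^sup>+u. ennreal (exp (- c * cosh u)) * indicator {0<..} u \<partial>lborel)"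
    by (rule nn_integral_even) auto
  also have "(\<integral>\<^sup>+u. ennreal (exp (- c * cosh u)) * indicator {0<..} u \<partial>lborel) = ennreal (bessel_K0 c)"
    using cpos by (rule K0_nn)
  finally have "(\<integral>\<^sup>+y. H y \<partial>lborel) = 2 * (ennreal (Cst^2 / \<alpha>) * (2 * ennreal (bessel_K0 c)))" .
  also have "\<dots> = ennreal (4 * (Cst^2 / \<alpha>) * bessel_K0 c)"
  proof -
    have Knn: "bessel_K0 c \<ge> 0"
      unfolding bessel_K0_def set_lebesgue_integral_def by (intro integral_nonneg_AE) auto
    have A: "Cst^2 / \<alpha> \<ge> 0" using al by simp
    have e1: "ennreal (4 * (Cst^2 / \<alpha>) * bessel_K0 c) = ennreal (4 * (Cst^2 / \<alpha>)) * ennreal (bessel_K0 c)"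
      by (rule ennreal_mult) (use A Knn in auto)
    have e2: "ennreal (4 * (Cst^2 / \<alpha>)) = ennreal 4 * ennreal (Cst^2 / \<alpha>)"
      by (rule ennreal_mult) (use A in auto)
    have e3: "(2::ennreal) * (x * (2 * y)) = 4 * x * y" for x y
      by (simp add: algebra_simps)
    show ?thesis unfolding e1 e2 e3 by simp
  qed
  also have "4 * (Cst^2 / \<alpha>) * bessel_K0 c = pgnd_density \<sigma> \<alpha> z"
    using z al Gpos unfolding pgnd_density_def Cst_def c_def b_def a_def L_def
    by (simp add: power2_eq_square field_simps)
  finally show ?thesis by (simp add: H_def)
qed

lemma bessel_K0_measurable[measurable]: "bessel_K0 \<in> borel_measurable borel"
  unfolding bessel_K0_def set_lebesgue_integral_def by measurable

lemma pgnd_density_measurable[measurable]: "pgnd_density \<sigma> \<alpha> \<in> borel_measurable borel"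
  unfolding pgnd_density_def by measurable

theorem theorem5:
  fixes M :: "'a measure" and X Y :: "'a \<Rightarrow> real" and \<sigma> \<alpha> :: real
  assumes "prob_space M"
    and "\<sigma> > 0" and "\<alpha> > 0"
    and "prob_space.indep_var M borel X borel Y"
    and "distributed M lborel X (\<lambda>x. ennreal (gnd_density \<sigma> \<alpha> x))"
    and "distributed M lborel Y (\<lambda>x. ennreal (gnd_density \<sigma> \<alpha> x))"
  shows "distributed M lborel (\<lambda>\<omega>. X \<omega> * Y \<omega>) (\<lambda>z. ennreal (pgnd_density \<sigma> \<alpha> z))"
proof -
  interpret prob_space M by fact
  have d: "distributed M lborel (\<lambda>\<omega>. X \<omega> * Y \<omega>)
    (\<lambda>z. \<integral>\<^sup>+y. ennreal (gnd_density \<sigma> \<alpha> (z / y)) * ennreal (gnd_density \<sigma> \<alpha> y) * ennreal (1 / \<bar>y\<bar>) \<partial>lborel)"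
    using assms(4-6) by (rule distributed_product)
  show ?thesis
  proof (subst distributed_cong_density[symmetric])
    show "AE z in lborel. (\<integral>\<^sup>+y. ennreal (gnd_density \<sigma> \<alpha> (z / y)) * ennreal (gnd_density \<sigma> \<alpha> y) * ennreal (1 / \<bar>y\<bar>) \<partial>lborel)
        = ennreal (pgnd_density \<sigma> \<alpha> z)"
      using assms(2,3) by (intro AE_I[where N="{0}"]) (auto intro: pgnd_integral)
  qed (use d in auto)
qed

end
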